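(* Let $X$ be a real topological vector space, let $C$ be a non-empty subset of $X$, and let $f:X\times X\to\mathbb{R}$ be a bifunction. Then $f$ is cyclically quasi-monotone on $C$ if and only if for every finite non-empty subset $A$ of $C$ there exists $x\in A$ such that \[ \max_{a\in A} f(a,x)\leq 0. \]
   Context: A bifunction $f:X\times X\to\mathbb{R}$ is called cyclically quasi-monotone on $C$ if for every $n\in\mathbb{N}$ and all $x_0,x_1,\dots,x_n\in C$ there exists $i\in\{0,1,\dots,n\}$ such that $f(x_i,x_{i+1})\leq 0$, where $x_{n+1}:=x_0$. *)

theory Defs
  imports "HOL-Analysis.Analysis"
begin

definition cyclically_quasi_monotone_on :: "'a set \<Rightarrow> ('a \<Rightarrow> 'a \<Rightarrow> real) \<Rightarrow> bool" where
  "cyclically_quasi_monotone_on C f \<longleftrightarrow>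
     (\<forall>(n::nat) (x::nat \<Rightarrow> 'a). (\<forall>i\<le>n. x i \<in> C) \<longrightarrow>
        (\<exists>i\<le>n. f (x i) (x (if i = n then 0 else Suc i)) \<le> 0))"

end

theory Submission
  imports Defs
begin

theorem proposition2p1:
  fixes C :: "'a::{real_vector, topological_space} set"
    and f :: "'a \<Rightarrow> 'a \<Rightarrow> real"
  assumes "C \<noteq> {}"
  shows "cyclically_quasi_monotone_on C f \<longleftrightarrow>
    (\<forall>A. finite A \<and> A \<noteq> {} \<and> A \<subseteq> C \<longrightarrow>
       (\<exists>x\<in>A. (MAX a\<in>A. f a x) \<le> 0))"
proof
  assume cq: "cyclically_quasi_monotone_on C f"
  show "\<forall>A. finite A \<and> A \<noteq> {} \<and> A \<subseteq> C \<longrightarrow> (\<exists>x\<in>A. (MAX a\<in>A. f a x) \<le> 0)"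
  proof (intro allI impI)
    fix A assume hA: "finite A \<and> A \<noteq> {} \<and> A \<subseteq> C"
    show "\<exists>x\<in>A. (MAX a\<in>A. f a x) \<le> 0"
    proof (rule ccontr)
      assume "\<not> ?thesis"
      hence "\<forall>x\<in>A. \<exists>a\<in>A. f a x > 0"
        using hA by (auto simp: Max_le_iff not_le)
      then obtain p where p: "\<And>x. x \<in> A \<Longrightarrow> p x \<in> A \<and> f (p x) x > 0"
        by metis
      obtain x0 where x0: "x0 \<in> A" using hA by blast
      define y where "y k = (p ^^ k) x0" for k
      have yA: "y k \<in> A" for k
        by (induction k) (auto simp: y_def x0 p)
      have ysuc: "y (Suc k) = p (y k)" for k by (simp add: y_def)
      have "\<not> inj_on y {..card A}"
      proof
        assume "inj_on y {..card A}"
        hence "card (y ` {..card A}) = card A + 1" by (simp add: card_image)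
        moreover have "card (y ` {..card A}) \<le> card A"
          using hA yA by (intro card_mono) auto
        ultimately show False by simp
      qed
      then obtain i j where ij: "i < j" "y i = y j"
        unfolding inj_on_def by (metis atMost_iff linorder_neqE_nat)
      define z where "z m = y (j - m)" for m
      define n where "n = j - i - 1"
      have "\<forall>m\<le>n. z m \<in> C" using yA hA by (auto simp: z_def)
      with cq obtain m where m: "m \<le> n" "f (z m) (z (if m = n then 0 else Suc m)) \<le> 0"
        unfolding cyclically_quasi_monotone_on_def by blast
      show False
      proof (cases "m = n")
        case True
        have "z m = y (Suc i)" using True ij by (simp add: z_def n_def Suc_diff_Suc)
        moreover have "z 0 = y i" using ij by (simp add: z_def)
        ultimately show False using m True p[OF yA[of i]] ysuc[of i] by simp
      next
        case False
        have "j - m = Suc (j - Suc m)" using False m ij by (simp add: n_def)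
        hence "z m = p (z (Suc m))" by (simp add: z_def ysuc)
        thus False using m False p[OF yA[of "j - Suc m"]] by (simp add: z_def)
      qed
    qed
  qed
next
  assume H: "\<forall>A. finite A \<and> A \<noteq> {} \<and> A \<subseteq> C \<longrightarrow> (\<exists>x\<in>A. (MAX a\<in>A. f a x) \<le> 0)"
  show "cyclically_quasi_monotone_on C f"
    unfolding cyclically_quasi_monotone_on_def
  proof (intro allI impI)
    fix n and x :: "nat \<Rightarrow> 'a" assume xC: "\<forall>i\<le>n. x i \<in> C"
    let ?A = "x ` {..n}"
    have "finite ?A \<and> ?A \<noteq> {} \<and> ?A \<subseteq> C" using xC by auto
    with H obtain w where w: "w \<in> ?A" "(MAX a\<in>?A. f a w) \<le> 0" by blast
    hence all: "\<forall>a\<in>?A. f a w \<le> 0" by (simp add: Max_le_iff)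
    from w obtain j where j: "j \<le> n" "w = x j" by auto
    show "\<exists>i\<le>n. f (x i) (x (if i = n then 0 else Suc i)) \<le> 0"
    proof (cases "j = 0")
      case True
      thus ?thesis using all j by (intro exI[of _ n]) auto
    next
      case False
      thus ?thesis using all j
        by (intro exI[of _ "j - 1"]) auto
    qed
  qed
qed

end
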